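(* Let $\Gamma=(V,E)$ be a $d$-regular graph on $N$ vertices whose adjacency matrix $A$ has eigenvalues $d=\lambda_1\ge\lambda_2\ge\dots\ge\lambda_N$. Let $M\in\{1,\dots,N-1\}$ with $|\lambda_M|<|\lambda_N|$, and let $U=\mathrm{Span}\{\mathbf{f}\}\oplus\bigoplus_{i>M}\ker(A-\lambda_iI)$. Let $X\subset V$ be an independent set, $\alpha=|X|/N$, and $D=\|\chi_X-P_U(\chi_X)\|_2$. Then $$D^2\le \frac{(1-\alpha)|\lambda_N|-d\alpha}{|\lambda_N|-|\lambda_M|}\,\alpha.$$
   Context: $\mathbf{f}$ is the all-ones vector in $\mathbb{R}^V$, $\chi_X$ the characteristic vector of $X$, and $\mathbb{R}^V$ carries the inner product $\langle x,y\rangle=\frac1{|V|}\sum_{i\in V}x_iy_i$ with norm $\|x\|_2=\sqrt{\langle x,x\rangle}$. $P_U$ denotes orthogonal projection onto $U$. An independent set is a set of vertices with no edges between them. *)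

theory Defs
  imports "HOL-Analysis.Analysis" "HOL-Computational_Algebra.Polynomial"
begin

definition simple_graph :: "('n \<Rightarrow> 'n \<Rightarrow> bool) \<Rightarrow> bool" where
  "simple_graph E \<longleftrightarrow> (\<forall>i j. E i j \<longrightarrow> E j i) \<and> (\<forall>i. \<not> E i i)"

definition regular :: "('n::finite \<Rightarrow> 'n \<Rightarrow> bool) \<Rightarrow> nat \<Rightarrow> bool" where
  "regular E d \<longleftrightarrow> (\<forall>i. card {j. E i j} = d)"

definition adj_matrix :: "('n::finite \<Rightarrow> 'n \<Rightarrow> bool) \<Rightarrow> real^'n^'n" where
  "adj_matrix E = (\<chi> i j. if E i j then 1 else 0)"

definition charpoly :: "real^'n^'n \<Rightarrow> real poly" where
  "charpoly A = det (mat [:0, 1:] - (\<chi> i j. [:A $ i $ j:]))"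

definition sorted_eigenvalues :: "real^'n^'n \<Rightarrow> (nat \<Rightarrow> real) \<Rightarrow> bool" where
  "sorted_eigenvalues A lam \<longleftrightarrow>
     charpoly A = (\<Prod>i\<in>{1..CARD('n)}. [:- lam i, 1:]) \<and>
     (\<forall>i j. 1 \<le> i \<longrightarrow> i \<le> j \<longrightarrow> j \<le> CARD('n) \<longrightarrow> lam j \<le> lam i)"

definition eigenspace :: "real^'n^'n \<Rightarrow> real \<Rightarrow> (real^'n) set" where
  "eigenspace A \<mu> = {x. A *v x = \<mu> *\<^sub>R x}"

definition ones :: "real^'n" where "ones = (\<chi> i. 1)"

definition charvec :: "'n set \<Rightarrow> real^'n" where
  "charvec X = (\<chi> i. if i \<in> X then 1 else 0)"

definition ip :: "real^'n::finite \<Rightarrow> real^'n \<Rightarrow> real" where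
  "ip x y = (1 / real CARD('n)) * (\<Sum>i\<in>UNIV. x $ i * y $ i)"

definition nrm2 :: "real^'n::finite \<Rightarrow> real" where
  "nrm2 x = sqrt (ip x x)"

definition orth_proj :: "(real^'n::finite) set \<Rightarrow> real^'n \<Rightarrow> real^'n" where
  "orth_proj U x = (THE p. p \<in> U \<and> (\<forall>u\<in>U. ip (x - p) u = 0))"

definition independent_set :: "('n \<Rightarrow> 'n \<Rightarrow> bool) \<Rightarrow> 'n set \<Rightarrow> bool" where
  "independent_set E X \<longleftrightarrow> (\<forall>i\<in>X. \<forall>j\<in>X. \<not> E i j)"

end

theory Submission imports Defs begin

lemma poly_det: "poly (det (P::real poly^'n::finite^'n)) c = det (\<chi> i j. poly (P$i$j) c)"
  unfolding det_def by (simp add: poly_sum poly_prod)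

lemma sym_dot:
  fixes A :: "real^'n::finite^'n"
  assumes "\<And>i j. A$i$j = A$j$i"
  shows "x \<bullet> (A *v y) = (A *v x) \<bullet> y"
proof -
  have "x \<bullet> (A *v y) = (\<Sum>i\<in>UNIV. \<Sum>j\<in>UNIV. x$i * A$i$j * y$j)"
    by (simp add: inner_vec_def matrix_vector_mult_def sum_distrib_left mult.assoc)
  also have "\<dots> = (\<Sum>j\<in>UNIV. \<Sum>i\<in>UNIV. x$i * A$i$j * y$j)" by (rule sum.swap)
  also have "\<dots> = (\<Sum>j\<in>UNIV. (\<Sum>i\<in>UNIV. A$j$i * x$i) * y$j)"
    by (simp add: sum_distrib_right sum_distrib_left assms mult.commute mult.left_commute)
  also have "\<dots> = (A *v x) \<bullet> y"
    by (simp add: inner_vec_def matrix_vector_mult_def)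
  finally show ?thesis .
qed

lemma mat_mv: "mat m *v (x::real^'n::finite) = m *\<^sub>R x"
  by (simp add: vec_eq_iff matrix_vector_mult_def mat_def if_distrib if_distribR cong: if_cong)

lemma eig_root:
  fixes A :: "real^'n::finite^'n"
  assumes "A *v x = m *\<^sub>R x" "x \<noteq> 0"
  shows "poly (charpoly A) m = 0"
proof -
  have e: "(\<chi> i j. poly ((mat [:0, 1:] - (\<chi> i j. [:A $ i $ j:]))$i$j) m) = mat m - A"
    by (simp add: vec_eq_iff mat_def)
  have mm: "mat m *v x = m *\<^sub>R x"
    by (simp add: vec_eq_iff matrix_vector_mult_def mat_def if_distrib if_distribR cong: if_cong)
  have "(mat m - A) *v x = 0"
    using assms(1) by (simp add: matrix_vector_mult_diff_rdistrib mm)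
  then have "\<not> invertible (mat m - A)"
    using assms(2) by (metis invertible_def matrix_vector_mul_assoc matrix_vector_mul_lid matrix_vector_mult_0_right)
  then show ?thesis unfolding charpoly_def poly_det e by (simp add: invertible_det_nz)
qed

lemma quad_zero:
  fixes a b :: real
  assumes "\<And>t. 0 \<le> 2 * t * a + t^2 * b" "0 \<le> b"
  shows "a = 0"
proof (rule ccontr)
  assume an: "a \<noteq> 0"
  define c where "c = b + 1"
  have cp: "c > 0" using assms(2) c_def by linarith
  define t where "t = - a / c"
  have tc: "t * c = - a" using cp t_def by simp
  have "0 \<le> 2 * t * a + t^2 * b" by (rule assms(1))
  also have "\<dots> \<le> 2 * t * a + t^2 * c" using c_def by (simp add: mult_left_mono)
  also have "t^2 * c = - t * a" using tc by (simp add: power2_eq_square mult.assoc)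
  also have "2 * t * a + - t * a = - (a * a) / c" using t_def by simp
  also have "\<dots> < 0" proof - have "0 < a * a" using an by (cases "a > 0") (auto simp: mult_neg_neg) then show ?thesis using cp by (simp add: divide_pos_pos) qed
  finally show False by simp
qed

lemma min_eig:
  fixes A :: "real^'n::finite^'n"
  assumes sym: "\<And>x y. x \<bullet> (A *v y) = (A *v x) \<bullet> y" and S: "subspace S"
    and inv: "\<And>x. x\<in>S \<Longrightarrow> A *v x \<in> S" and ne: "z \<in> S" "z \<noteq> 0"
  shows "\<exists>m x. x \<in> S \<and> x \<noteq> 0 \<and> A *v x = m *\<^sub>R x \<and> (\<forall>y\<in>S. m * (y\<bullet>y) \<le> y \<bullet> (A *v y))"
proof -
  let ?K = "S \<inter> sphere 0 1"
  have cK: "compact ?K"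
  proof -
    have "compact (sphere 0 1 \<inter> S)" by (rule compact_Int_closed) (auto simp: S closed_subspace)
    then show ?thesis by (simp add: Int_commute)
  qed
  have "z /\<^sub>R norm z \<in> ?K" using ne S by (simp add: subspace_scale)
  then have neK: "?K \<noteq> {}" by blast
  have cont: "continuous_on ?K (\<lambda>x. x \<bullet> (A *v x))"
    by (intro continuous_intros matrix_vector_mult_linear_continuous_on continuous_on_id)
  obtain x0 where x0: "x0 \<in> ?K" and mn: "\<And>y. y \<in> ?K \<Longrightarrow> x0 \<bullet> (A *v x0) \<le> y \<bullet> (A *v y)"
    using continuous_attains_inf[OF cK neK cont] by blast
  define m where "m = x0 \<bullet> (A *v x0)"
  have x0S: "x0 \<in> S" and nx0: "norm x0 = 1" using x0 by auto
  have quad: "m * (y\<bullet>y) \<le> y \<bullet> (A *v y)" if "y \<in> S" for y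
  proof (cases "y = 0")
    case True then show ?thesis by simp
  next
    case False
    let ?w = "y /\<^sub>R norm y"
    have "?w \<in> ?K" using that False S by (simp add: subspace_scale)
    then have "m \<le> ?w \<bullet> (A *v ?w)" using mn m_def by blast
    also have "\<dots> = (y \<bullet> (A *v y)) / (norm y)^2"
      by (simp add: matrix_vector_mult_scaleR power2_eq_square divide_inverse)
    finally have "m * (norm y)^2 \<le> y \<bullet> (A *v y)"
      using False by (simp add: pos_le_divide_eq)
    then show ?thesis by (simp add: power2_norm_eq_inner)
  qed
  define B where "B = A - mat m"
  have Bv: "B *v v = A *v v - m *\<^sub>R v" for v
    by (simp add: B_def matrix_vector_mult_diff_rdistrib mat_mv)
  have Bsym: "a \<bullet> (B *v b) = (B *v a) \<bullet> b" for a b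
    by (simp add: Bv inner_diff_right inner_diff_left sym)
  have Bpos: "0 \<le> y \<bullet> (B *v y)" if "y \<in> S" for y
    using quad[OF that] by (simp add: Bv inner_diff_right)
  have B0: "x0 \<bullet> (B *v x0) = 0"
    using nx0 by (simp add: Bv inner_diff_right m_def power2_norm_eq_inner[symmetric])
  have BS: "B *v x0 \<in> S" using Bv inv x0S S by (simp add: subspace_diff subspace_scale)
  let ?y = "B *v x0"
  let ?a = "?y \<bullet> ?y" let ?b = "?y \<bullet> (B *v ?y)"
  have pos: "\<And>t. 0 \<le> (x0 + t *\<^sub>R ?y) \<bullet> (B *v (x0 + t *\<^sub>R ?y))"
    using Bpos BS x0S S by (simp add: subspace_add subspace_scale)
  have e1: "x0 \<bullet> (B *v ?y) = ?a" using Bsym[of x0 ?y] by simp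
  have ineq: "0 \<le> 2 * t * ?a + t^2 * ?b" for t
  proof -
    have "(x0 + t *\<^sub>R ?y) \<bullet> (B *v (x0 + t *\<^sub>R ?y))
        = x0 \<bullet> (B *v x0) + t * (x0 \<bullet> (B *v ?y)) + t * (?y \<bullet> ?y) + t * t * ?b"
      by (simp add: matrix_vector_right_distrib matrix_vector_mult_scaleR inner_add_left inner_add_right distrib_left)
    also have "\<dots> = 2 * t * ?a + t^2 * ?b" using B0 e1 by (simp add: power2_eq_square)
    finally show ?thesis using pos[of t] by simp
  qed
  have bge: "0 \<le> ?b" using Bpos BS by blast
  have "?a = 0" using quad_zero[of ?a ?b] ineq bge by blast
  then have "A *v x0 = m *\<^sub>R x0" using Bv by simp
  then show ?thesis using x0S nx0 quad by (intro exI[of _ m] exI[of _ x0]) auto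
qed


lemma ip_dot: "ip x y = (x \<bullet> y) / real CARD('n)" for x y :: "real^'n::finite"
  by (simp add: ip_def inner_vec_def)

theorem lemma4p2:
  fixes E :: "'n::finite \<Rightarrow> 'n \<Rightarrow> bool" and d :: nat and lam :: "nat \<Rightarrow> real"
    and M :: nat and X :: "'n set"
  assumes "simple_graph E"
    and "regular E d"
    and "sorted_eigenvalues (adj_matrix E) lam"
    and "lam 1 = real d"
    and "1 \<le> M" and "M \<le> CARD('n) - 1"
    and "\<bar>lam M\<bar> < \<bar>lam CARD('n)\<bar>"
    and "independent_set E X"
  shows "let N = CARD('n);
             U = span ({ones} \<union> (\<Union>i\<in>{M<..N}. eigenspace (adj_matrix E) (lam i)));
             \<alpha> = real (card X) / real N;
             D = nrm2 (charvec X - orth_proj U (charvec X))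
         in D\<^sup>2 \<le> ((1 - \<alpha>) * \<bar>lam N\<bar> - real d * \<alpha>) / (\<bar>lam N\<bar> - \<bar>lam M\<bar>) * \<alpha>"
proof -
  define N where "N = CARD('n)"
  define A where "A = adj_matrix E"
  define G where "G = {ones} \<union> (\<Union>i\<in>{M<..N}. eigenspace A (lam i))"
  define U where "U = span G"
  define ch where "ch = charvec X"
  define c where "c = real (card X)"
  define \<alpha> where "\<alpha> = c / real N"
  define f :: "real^'n" where "f = ones"
  have Np: "real N > 0" unfolding N_def by simp
  have M2: "M \<le> N" "1 \<le> M" using assms(5,6) unfolding N_def by auto
  have Asym: "A$i$j = A$j$i" for i j
    using assms(1) unfolding A_def adj_matrix_def simple_graph_def by auto
  have sym: "x \<bullet> (A *v y) = (A *v x) \<bullet> y" for x y by (rule sym_dot[OF Asym])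
  have Af: "A *v f = real d *\<^sub>R f"
  proof -
    have "(\<Sum>j\<in>UNIV. (if E i j then 1 else 0) * (1::real)) = real d" for i
      using assms(2) unfolding regular_def by (simp add: sum.If_cases)
    then show ?thesis unfolding A_def adj_matrix_def f_def ones_def
      by (simp add: vec_eq_iff matrix_vector_mult_def)
  qed
  have chiA: "ch \<bullet> (A *v ch) = 0"
  proof -
    have z0: "ch$i * (A$i$j * ch$j) = 0" for i j
      using assms(8) unfolding ch_def charvec_def A_def adj_matrix_def independent_set_def by auto
    then show ?thesis by (simp add: inner_vec_def matrix_vector_mult_def sum_distrib_left z0)
  qed
  have chichi: "ch \<bullet> ch = c" and chif: "ch \<bullet> f = c" and ff: "f \<bullet> f = real N"
    unfolding ch_def charvec_def c_def f_def ones_def N_def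
    by (simp_all add: inner_vec_def sum.If_cases if_distrib if_distribR cong: if_cong)
  have charp: "charpoly A = (\<Prod>i\<in>{1..N}. [:- lam i, 1:])"
    and sorted: "\<And>i j. 1 \<le> i \<Longrightarrow> i \<le> j \<Longrightarrow> j \<le> N \<Longrightarrow> lam j \<le> lam i"
    using assms(3) unfolding sorted_eigenvalues_def A_def N_def by auto
  have eig: "\<exists>i\<in>{1..N}. m = lam i" if "A *v x = m *\<^sub>R x" "x \<noteq> 0" for m x
  proof -
    have "poly (charpoly A) m = 0" by (rule eig_root[OF that])
    then have "(\<Prod>i\<in>{1..N}. (m - lam i)) = 0" unfolding charp by (simp add: poly_prod)
    then show ?thesis by auto
  qed
  have lNneg: "lam N < 0"
  proof (rule ccontr)
    assume "\<not> lam N < 0"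
    moreover have "lam N \<le> lam M" using sorted M2 by auto
    ultimately show False using assms(7) unfolding N_def by auto
  qed
  have Usub: "subspace U" unfolding U_def by simp
  have fU: "f \<in> U" unfolding U_def G_def f_def by (simp add: span_base)
  have AU: "A *v x \<in> U" if "x \<in> U" for x
  proof -
    have "(*v) A ` G \<subseteq> U"
    proof
      fix y assume "y \<in> (*v) A ` G"
      then obtain g where g: "g \<in> G" "y = A *v g" by auto
      show "y \<in> U"
      proof (cases "g = f")
        case True then show ?thesis using g Af fU Usub by (simp add: subspace_scale)
      next
        case False
        then obtain i where "A *v g = lam i *\<^sub>R g" "g \<in> G" using g unfolding G_def f_def eigenspace_def by auto
        then show ?thesis using g Usub unfolding U_def by (simp add: span_base span_scale)
      qed
    qed
    then have "span ((*v) A ` G) \<subseteq> U" unfolding U_def by (simp add: span_minimal)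
    then show ?thesis using that unfolding U_def
      by (simp add: span_linear_image[OF matrix_vector_mul_linear, symmetric]) (metis image_eqI subsetD span_linear_image[OF matrix_vector_mul_linear])
  qed
  obtain p z where pU: "p \<in> U" and zort: "\<And>w. w \<in> U \<Longrightarrow> orthogonal z w" and dec: "ch = p + z"
    using orthogonal_subspace_decomp_exists[of G ch] unfolding U_def by metis
  have proj: "orth_proj U ch = p"
    unfolding orth_proj_def
  proof (rule the_equality)
    show "p \<in> U \<and> (\<forall>u\<in>U. ip (ch - p) u = 0)"
      using pU zort dec by (simp add: ip_dot orthogonal_def)
  next
    fix q assume q: "q \<in> U \<and> (\<forall>u\<in>U. ip (ch - q) u = 0)"
    have w: "p - q \<in> U" using q pU Usub by (simp add: subspace_diff)
    have "(ch - q) \<bullet> (p - q) = 0" using q w Np by (simp add: ip_dot)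
    moreover have "z \<bullet> (p - q) = 0" using zort w by (simp add: orthogonal_def)
    ultimately have "(p - q) \<bullet> (p - q) = 0" using dec by (simp add: inner_diff_left inner_add_left)
    then show "q = p" by simp
  qed
  define v where "v = ch - p"
  have vort: "v \<bullet> w = 0" if "w \<in> U" for w
    using zort[OF that] dec unfolding v_def orthogonal_def by simp
  define W where "W = {x. \<forall>w\<in>U. x \<bullet> w = 0}"
  have Wsub: "subspace W" unfolding W_def subspace_def by (auto simp: inner_add_left)
  have AW: "A *v x \<in> W" if "x \<in> W" for x
  proof -
    have "(A *v x) \<bullet> w = 0" if "w \<in> U" for w
    proof -
      have "(A *v x) \<bullet> w = x \<bullet> (A *v w)" using sym[of x w] by simp
      also have "\<dots> = 0" using AU[OF that] \<open>x \<in> W\<close> unfolding W_def by blast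
      finally show ?thesis .
    qed
    then show ?thesis unfolding W_def by blast
  qed
  have vW: "v \<in> W" using vort unfolding W_def by auto
  have vb: "lam M * (v \<bullet> v) \<le> v \<bullet> (A *v v)"
  proof (cases "v = 0")
    case True then show ?thesis by simp
  next
    case False
    obtain m x where mx: "x \<in> W" "x \<noteq> 0" "A *v x = m *\<^sub>R x" and q: "\<forall>y\<in>W. m * (y\<bullet>y) \<le> y \<bullet> (A *v y)"
      using min_eig[OF sym Wsub AW vW False] by blast
    obtain i where i: "i \<in> {1..N}" "m = lam i" using eig[OF mx(3) mx(2)] by blast
    have "i \<le> M"
    proof (rule ccontr)
      assume "\<not> i \<le> M"
      then have "x \<in> G" using i mx(3) unfolding G_def eigenspace_def by auto
      then have "x \<in> U" unfolding U_def by (simp add: span_base)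
      then have "x \<bullet> x = 0" using mx(1) unfolding W_def by auto
      then show False using mx(2) by simp
    qed
    then have "lam M \<le> m" using i sorted M2 by auto
    then have "lam M * (v \<bullet> v) \<le> m * (v \<bullet> v)" by (simp add: mult_right_mono)
    moreover have "m * (v \<bullet> v) \<le> v \<bullet> (A *v v)" using q vW by blast
    ultimately show ?thesis by linarith
  qed
  have ub: "lam N * (y \<bullet> y) \<le> y \<bullet> (A *v y)" for y
  proof -
    have f0: "f \<noteq> 0" unfolding f_def ones_def by (simp add: vec_eq_iff)
    obtain m x where mx: "x \<noteq> 0" "A *v x = m *\<^sub>R x" and q: "\<forall>y\<in>UNIV. m * (y\<bullet>y) \<le> y \<bullet> (A *v y)"
      using min_eig[OF sym subspace_UNIV _ _ f0] by blast
    obtain i where i: "i \<in> {1..N}" "m = lam i" using eig[OF mx(2) mx(1)] by blast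
    then have "lam N \<le> m" using sorted by auto
    then have "lam N * (y \<bullet> y) \<le> m * (y \<bullet> y)" by (simp add: mult_right_mono)
    moreover have "m * (y \<bullet> y) \<le> y \<bullet> (A *v y)" using q by blast
    ultimately show ?thesis by linarith
  qed
  define u where "u = p - \<alpha> *\<^sub>R f"
  have uU: "u \<in> U" using pU fU Usub unfolding u_def by (simp add: subspace_diff subspace_scale)
  have cdec: "ch = \<alpha> *\<^sub>R f + u + v" unfolding u_def v_def by simp
  have cN: "c = \<alpha> * real N" using Np unfolding \<alpha>_def by simp
  have vf: "v \<bullet> f = 0" using vort fU by simp
  have uf: "u \<bullet> f = 0"
  proof -
    have "p \<bullet> f = c" using vf chif unfolding v_def by (simp add: inner_diff_left)
    then show ?thesis unfolding u_def using ff cN by (simp add: inner_diff_left)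
  qed
  have uv: "v \<bullet> u = 0" using vort uU by simp
  have AvW: "A *v v \<in> W" using AW vW by simp
  have fAv: "f \<bullet> (A *v v) = 0" using AvW fU unfolding W_def by (simp add: inner_commute)
  have uAv: "u \<bullet> (A *v v) = 0" using AvW uU unfolding W_def by (simp add: inner_commute)
  have vAu: "v \<bullet> (A *v u) = 0" using sym uAv by (simp add: inner_commute)
  have fAu: "f \<bullet> (A *v u) = 0" using sym[of f u] Af uf by (simp add: inner_commute)
  have uAf: "u \<bullet> (A *v f) = 0" using Af uf by simp
  have vAf: "v \<bullet> (A *v f) = 0" using Af vf by simp
  have fAf: "f \<bullet> (A *v f) = real d * real N" using Af ff by simp
  have key1: "0 = \<alpha>^2 * real d * real N + u \<bullet> (A *v u) + v \<bullet> (A *v v)"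
    using chiA unfolding cdec
    by (simp add: matrix_vector_right_distrib matrix_vector_mult_scaleR inner_add_left inner_add_right
        fAv uAv vAu fAu uAf vAf fAf power2_eq_square algebra_simps)
  have key2: "c = \<alpha>^2 * real N + u \<bullet> u + v \<bullet> v"
    using chichi unfolding cdec
    by (simp add: inner_add_left inner_add_right uf vf uv inner_commute[of f u] inner_commute[of f v] inner_commute[of u v] ff power2_eq_square algebra_simps)
  define L where "L = \<bar>lam N\<bar>"
  define K where "K = \<bar>lam M\<bar>"
  have L: "lam N = - L" using lNneg L_def by simp
  have KL: "K < L" using assms(7) unfolding K_def L_def N_def by simp
  have Km: "- K \<le> lam M" unfolding K_def by simp
  define s where "s = v \<bullet> v"
  have s0: "s \<ge> 0" unfolding s_def by simp
  have "- K * s \<le> lam M * s" using mult_right_mono[OF Km s0] .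
  then have "0 \<ge> \<alpha>^2 * real d * real N - L * (u \<bullet> u) - K * s"
  proof -
    have "- L * (u \<bullet> u) \<le> u \<bullet> (A *v u)" using ub[of u] L by simp
    then show ?thesis using key1 vb \<open>- K * s \<le> lam M * s\<close> unfolding s_def by linarith
  qed
  then have "0 \<ge> \<alpha>^2 * real d * real N - L * (c - \<alpha>^2 * real N - s) - K * s"
    using key2 unfolding s_def by simp
  then have "(L - K) * s \<le> L * (c - \<alpha>^2 * real N) - \<alpha>^2 * real d * real N"
    by (simp add: algebra_simps)
  then have "(L - K) * s \<le> (((1 - \<alpha>) * L - real d * \<alpha>) * \<alpha>) * real N"
    unfolding cN by (simp add: algebra_simps power2_eq_square)
  then have "(L - K) * (s / real N) \<le> ((1 - \<alpha>) * L - real d * \<alpha>) * \<alpha>"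
    using Np by (simp add: field_simps)
  then have fin: "s / real N \<le> ((1 - \<alpha>) * L - real d * \<alpha>) / (L - K) * \<alpha>"
    using KL by (simp add: field_simps)
  have D2: "(nrm2 v)^2 = s / real N"
    unfolding nrm2_def s_def using Np by (simp add: ip_dot N_def)
  have proj': "orth_proj (span ({ones} \<union> (\<Union>i\<in>{M<..CARD('n)}. eigenspace (adj_matrix E) (lam i)))) (charvec X) = p"
    using proj unfolding U_def G_def A_def ch_def N_def f_def .
  show ?thesis
    using fin D2 unfolding Let_def proj' v_def ch_def
      L_def K_def N_def \<alpha>_def c_def by simp
qed

end
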